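(* Let $H$ be a graph (possibly with loops) on $n$ vertices. Then for any integer $c\geq 2n$, the independence number of the exponential graph satisfies $\alpha(\mathcal{E}_c(H))\leq n c^{n-1}$.
   Context: For a finite graph $H$ (no multiple edges, loops allowed) and integer $c\ge 1$, two maps $\phi_1,\phi_2:V(H)\to[c]$ are co-proper if $\phi_1(u)\ne\phi_2(v)$ whenever $u\sim v$ in $H$. The exponential graph $\mathcal{E}_c(H)$ has vertex set $[c]^{V(H)}$, with $\phi_1\sim\phi_2$ iff they are co-proper. An independent set is a set of vertices no two distinct members of which are adjacent; $\alpha$ is the maximum size of an independent set. *)

theory Defs
  imports "HOL-Library.FuncSet"
begin

text \<open>A finite graph H (loops allowed, no multiple edges) is given by a finite vertex set V
and a symmetric adjacency relation E (E u u allowed = loop at u).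
Colour set [c] = {1..c}.\<close>

definition graph_on :: "'a set \<Rightarrow> ('a \<Rightarrow> 'a \<Rightarrow> bool) \<Rightarrow> bool" where
  "graph_on V E \<longleftrightarrow> finite V \<and> (\<forall>u v. E u v \<longrightarrow> u \<in> V \<and> v \<in> V) \<and> (\<forall>u v. E u v \<longrightarrow> E v u)"

definition exp_verts :: "'a set \<Rightarrow> nat \<Rightarrow> ('a \<Rightarrow> nat) set" where
  "exp_verts V c = (V \<rightarrow>\<^sub>E {1..c})"

definition co_proper :: "'a set \<Rightarrow> ('a \<Rightarrow> 'a \<Rightarrow> bool) \<Rightarrow> ('a \<Rightarrow> nat) \<Rightarrow> ('a \<Rightarrow> nat) \<Rightarrow> bool" where
  "co_proper V E \<phi>1 \<phi>2 \<longleftrightarrow> (\<forall>u\<in>V. \<forall>v\<in>V. E u v \<longrightarrow> \<phi>1 u \<noteq> \<phi>2 v)"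

definition exp_indep :: "'a set \<Rightarrow> ('a \<Rightarrow> 'a \<Rightarrow> bool) \<Rightarrow> nat \<Rightarrow> ('a \<Rightarrow> nat) set \<Rightarrow> bool" where
  "exp_indep V E c S \<longleftrightarrow> S \<subseteq> exp_verts V c \<and>
     (\<forall>\<phi>1\<in>S. \<forall>\<phi>2\<in>S. \<phi>1 \<noteq> \<phi>2 \<longrightarrow> \<not> co_proper V E \<phi>1 \<phi>2)"

definition exp_alpha :: "'a set \<Rightarrow> ('a \<Rightarrow> 'a \<Rightarrow> bool) \<Rightarrow> nat \<Rightarrow> nat" where
  "exp_alpha V E c = Max (card ` {S. exp_indep V E c S})"

end

theory Submission imports Defs begin

lemma mod_lt2: "(a::nat) < 2*c \<Longrightarrow> a mod c = (if a < c then a else a - c)"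
  by (simp add: le_mod_geq)

lemma cdiff: "(i::nat) < c \<Longrightarrow> j < c \<Longrightarrow> (j + c - i) mod c = (if i \<le> j then j - i else j + c - i)"
  by (simp add: mod_lt2)

lemma modeq: "(i::nat) < c \<Longrightarrow> j < c \<Longrightarrow> x < c \<Longrightarrow> y < c \<Longrightarrow> (i+x) mod c = (j+y) mod c \<Longrightarrow>
   i+x = j+y \<or> i+x = j+y+c \<or> j+y = i+x+c"
  by (simp add: mod_lt2 split: if_splits; arith)

lemma interval_lemma:
  fixes J :: "nat set" and c k :: nat
  assumes J: "J \<subseteq> {0..<c}" and k1: "1 \<le> k" and kc: "2*k \<le> c"
    and inter: "\<And>i j. i \<in> J \<Longrightarrow> j \<in> J \<Longrightarrow> i \<noteq> j \<Longrightarrow> \<exists>x<k. \<exists>y<k. (i+x) mod c = (j+y) mod c"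
  shows "card J \<le> k"
proof (cases "J = {}")
  case True then show ?thesis by simp
next
  case False
  then obtain i0 where i0: "i0 \<in> J" by blast
  have ic: "i < c" if "i \<in> J" for i using J that by auto
  define d where "d j = (if i0 \<le> j then j - i0 else j + c - i0)" for j
  define g where "g j = (if d j < k then d j else d j + k - c)" for j
  have near: "d j < k \<or> d j > c - k" if jJ: "j \<in> J" for j
  proof (cases "j = i0")
    case True then show ?thesis using k1 by (simp add: d_def)
  next
    case False
    then obtain x y where xy: "x<k" "y<k" "(i0+x) mod c = (j+y) mod c" using inter[OF i0 jJ] by metis
    have "i0 < c" "j < c" using ic i0 jJ by auto
    then have "i0+x = j+y \<or> i0+x = j+y+c \<or> j+y = i0+x+c" using modeq[OF _ _ _ _ xy(3)] xy kc by simp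
    then show ?thesis using xy kc \<open>i0 < c\<close> \<open>j < c\<close> unfolding d_def by auto
  qed
  have "inj_on g J"
  proof (rule inj_onI)
    fix a b assume a: "a \<in> J" and b: "b \<in> J" and gab: "g a = g b"
    show "a = b"
    proof (rule ccontr)
      assume ne: "a \<noteq> b"
      then obtain x y where xy: "x<k" "y<k" "(a+x) mod c = (b+y) mod c" using inter[OF a b] by metis
      have "a < c" "b < c" "i0 < c" using ic a b i0 by auto
      then have e: "a+x = b+y \<or> a+x = b+y+c \<or> b+y = a+x+c" using modeq[OF _ _ _ _ xy(3)] xy kc by simp
      have na: "d a < k \<or> d a > c - k" and nb: "d b < k \<or> d b > c - k" using near a b by auto
      show False
        using e na nb gab ne xy kc \<open>a < c\<close> \<open>b < c\<close> \<open>i0 < c\<close> unfolding g_def d_def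
        by (auto split: if_splits)
    qed
  qed
  moreover have "g ` J \<subseteq> {0..<k}"
  proof
    fix z assume "z \<in> g ` J"
    then obtain j where j: "j \<in> J" "z = g j" by blast
    have "j < c" "i0 < c" using ic j(1) i0 by auto
    then have "d j < c" unfolding d_def by auto
    then show "z \<in> {0..<k}" using near[OF j(1)] kc unfolding j(2) g_def by auto
  qed
  ultimately show ?thesis using card_inj_on_le[of g J "{0..<k}"] by simp
qed

definition Pset :: "nat \<Rightarrow> (nat \<Rightarrow> nat) set" where
  "Pset c = {\<sigma> \<in> {0..<c} \<rightarrow>\<^sub>E {1..c}. bij_betw \<sigma> {0..<c} {1..c}}"
definition Rset :: "'a set \<Rightarrow> nat \<Rightarrow> nat \<Rightarrow> ('a \<Rightarrow> nat) set" where
  "Rset V c k = {\<psi> \<in> V \<rightarrow>\<^sub>E {0..<c}. \<psi> ` V = {0..<k}}"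
definition cmp :: "'a set \<Rightarrow> (nat \<Rightarrow> nat) \<Rightarrow> ('a \<Rightarrow> nat) \<Rightarrow> ('a \<Rightarrow> nat)" where
  "cmp V \<sigma> \<psi> = (\<lambda>v\<in>V. \<sigma> (\<psi> v))"
definition shf :: "'a set \<Rightarrow> nat \<Rightarrow> nat \<Rightarrow> ('a \<Rightarrow> nat) \<Rightarrow> ('a \<Rightarrow> nat)" where
  "shf V c j \<psi> = (\<lambda>v\<in>V. (\<psi> v + j) mod c)"
definition isect :: "'a set \<Rightarrow> ('a \<Rightarrow> nat) set \<Rightarrow> bool" where
  "isect V F \<longleftrightarrow> (\<forall>\<phi>1\<in>F. \<forall>\<phi>2\<in>F. \<phi>1 \<noteq> \<phi>2 \<longrightarrow> \<phi>1 ` V \<inter> \<phi>2 ` V \<noteq> {})"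

lemma finite_Pset: "finite (Pset c)"
proof -
  have "finite ({0..<c} \<rightarrow>\<^sub>E {1..c})" by (rule finite_PiE) auto
  then show ?thesis unfolding Pset_def by simp
qed

lemma finite_Rset: "finite V \<Longrightarrow> finite (Rset V c k)"
proof -
  assume "finite V"
  then have "finite (V \<rightarrow>\<^sub>E {0..<c})" by (rule finite_PiE) auto
  then show ?thesis unfolding Rset_def by simp
qed

lemma shift_bound:
  assumes \<sigma>: "\<sigma> \<in> Pset c" and \<psi>: "\<psi> \<in> Rset V c k" and V: "V \<noteq> {}" and k1: "1 \<le> k"
    and kc: "2*k \<le> c" and F: "isect V F"
  shows "card {j\<in>{0..<c}. cmp V \<sigma> (shf V c j \<psi>) \<in> F} \<le> k"
proof (rule interval_lemma[OF _ k1 kc])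
  show "{j\<in>{0..<c}. cmp V \<sigma> (shf V c j \<psi>) \<in> F} \<subseteq> {0..<c}" by auto
next
  fix i j assume i: "i \<in> {j\<in>{0..<c}. cmp V \<sigma> (shf V c j \<psi>) \<in> F}"
    and j: "j \<in> {j\<in>{0..<c}. cmp V \<sigma> (shf V c j \<psi>) \<in> F}" and ij: "i \<noteq> j"
  have injs: "inj_on \<sigma> {0..<c}" using \<sigma> by (simp add: Pset_def bij_betw_def)
  have \<psi>k: "\<psi> v < k" if "v \<in> V" for v using \<psi> that unfolding Rset_def by auto
  have kc': "k \<le> c" using kc by simp
  have ic: "i < c" and jc: "j < c" using i j by auto
  obtain v0 where v0: "v0 \<in> V" using V by blast
  have c0: "c > 0" using ic by simp
  have val: "cmp V \<sigma> (shf V c t \<psi>) v = \<sigma> ((\<psi> v + t) mod c)" if "v \<in> V" for v t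
    using that unfolding cmp_def shf_def by simp
  have modin: "(a::nat) mod c \<in> {0..<c}" for a using c0 by simp
  have "cmp V \<sigma> (shf V c i \<psi>) \<noteq> cmp V \<sigma> (shf V c j \<psi>)"
  proof
    assume "cmp V \<sigma> (shf V c i \<psi>) = cmp V \<sigma> (shf V c j \<psi>)"
    then have "\<sigma> ((\<psi> v0 + i) mod c) = \<sigma> ((\<psi> v0 + j) mod c)"
      using val[OF v0, of i] val[OF v0, of j] by simp
    then have eq: "(\<psi> v0 + i) mod c = (\<psi> v0 + j) mod c"
      using inj_onD[OF injs _ modin modin] by blast
    have "\<psi> v0 < c" using \<psi>k[OF v0] kc' by simp
    then have "\<psi> v0 + i = \<psi> v0 + j \<or> \<psi> v0 + i = \<psi> v0 + j + c \<or> \<psi> v0 + j = \<psi> v0 + i + c"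
      using modeq[OF _ _ ic jc eq] by blast
    then show False using ic jc ij by linarith
  qed
  then have "cmp V \<sigma> (shf V c i \<psi>) ` V \<inter> cmp V \<sigma> (shf V c j \<psi>) ` V \<noteq> {}"
    using F i j unfolding isect_def by blast
  then obtain z where z1: "z \<in> cmp V \<sigma> (shf V c i \<psi>) ` V" and z2: "z \<in> cmp V \<sigma> (shf V c j \<psi>) ` V"
    by blast
  obtain u where u: "u \<in> V" "z = cmp V \<sigma> (shf V c i \<psi>) u" using z1 by blast
  obtain w where w: "w \<in> V" "z = cmp V \<sigma> (shf V c j \<psi>) w" using z2 by blast
  have "\<sigma> ((\<psi> u + i) mod c) = \<sigma> ((\<psi> w + j) mod c)"
    using u w val[OF u(1), of i] val[OF w(1), of j] by simp
  then have "(\<psi> u + i) mod c = (\<psi> w + j) mod c"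
    using inj_onD[OF injs _ modin modin] by blast
  then have "(i + \<psi> u) mod c = (j + \<psi> w) mod c" by (simp add: add.commute)
  then show "\<exists>x<k. \<exists>y<k. (i + x) mod c = (j + y) mod c"
    using \<psi>k[OF u(1)] \<psi>k[OF w(1)] by blast
qed

lemma shift_bij: fixes j c :: nat assumes "j < c"
  shows "bij_betw (\<lambda>x. (x + j) mod c) {0..<c} {0..<c}"
proof -
  have inj: "inj_on (\<lambda>x. (x + j) mod c) {0..<c}"
  proof (rule inj_onI)
    fix x y assume "x \<in> {0..<c}" "y \<in> {0..<c}" "(x + j) mod c = (y + j) mod c"
    then show "x = y" using modeq[of x c y j j] assms by auto
  qed
  moreover have "(\<lambda>x. (x + j) mod c) ` {0..<c} \<subseteq> {0..<c}" using assms by auto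
  ultimately show ?thesis unfolding bij_betw_def using endo_inj_surj[of "{0..<c}"] by auto
qed

lemma shift_reindex: fixes j c :: nat assumes "j < c"
  shows "bij_betw (\<lambda>\<sigma>. restrict (\<sigma> \<circ> (\<lambda>x. (x+j) mod c)) {0..<c}) (Pset c) (Pset c)"
proof -
  let ?s = "\<lambda>x. (x+j) mod c"
  let ?h = "\<lambda>\<sigma>. restrict (\<sigma> \<circ> ?s) {0..<c}"
  have sb: "bij_betw ?s {0..<c} {0..<c}" by (rule shift_bij[OF assms])
  have into: "?h ` Pset c \<subseteq> Pset c"
  proof
    fix \<tau> assume "\<tau> \<in> ?h ` Pset c"
    then obtain \<sigma> where \<sigma>: "\<sigma> \<in> Pset c" "\<tau> = ?h \<sigma>" by blast
    have "bij_betw (\<sigma> \<circ> ?s) {0..<c} {1..c}"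
      using bij_betw_trans[OF sb] \<sigma>(1) unfolding Pset_def by auto
    then have "bij_betw \<tau> {0..<c} {1..c}" unfolding \<sigma>(2)
      by (rule bij_betw_cong[THEN iffD1, rotated]) auto
    moreover have "\<tau> \<in> {0..<c} \<rightarrow>\<^sub>E {1..c}"
      using \<sigma>(1) sb unfolding \<sigma>(2) Pset_def bij_betw_def by auto
    ultimately show "\<tau> \<in> Pset c" unfolding Pset_def by simp
  qed
  have inj: "inj_on ?h (Pset c)"
  proof (rule inj_onI)
    fix \<sigma>1 \<sigma>2 assume s1: "\<sigma>1 \<in> Pset c" and s2: "\<sigma>2 \<in> Pset c" and eq: "?h \<sigma>1 = ?h \<sigma>2"
    show "\<sigma>1 = \<sigma>2"
    proof (rule extensionalityI[of _ "{0..<c}"])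
      show "\<sigma>1 \<in> extensional {0..<c}" "\<sigma>2 \<in> extensional {0..<c}"
        using s1 s2 unfolding Pset_def by (auto simp: PiE_def)
    next
      fix x assume x: "x \<in> {0..<c}"
      then obtain y where y: "y \<in> {0..<c}" "x = ?s y" using sb unfolding bij_betw_def by blast
      have "?h \<sigma>1 y = ?h \<sigma>2 y" using eq by simp
      then show "\<sigma>1 x = \<sigma>2 x" using y by simp
    qed
  qed
  have "?h ` Pset c = Pset c" using endo_inj_surj[OF finite_Pset into inj] .
  then show ?thesis using inj unfolding bij_betw_def by simp
qed

lemma cmp_shift:
  assumes "\<psi> \<in> V \<rightarrow>\<^sub>E {0..<c}"
  shows "cmp V (restrict (\<sigma> \<circ> (\<lambda>x. (x+j) mod c)) {0..<c}) \<psi> = cmp V \<sigma> (shf V c j \<psi>)"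
  using assms unfolding cmp_def shf_def by (intro restrict_ext) auto

lemma card_filter_sum: "finite A \<Longrightarrow> card {x\<in>A. P x} = (\<Sum>x\<in>A. if P x then 1 else 0)"
  by (simp add: sum.inter_filter[symmetric])

lemma sum_shift:
  assumes R: "R \<subseteq> V \<rightarrow>\<^sub>E {0..<c}" and fR: "finite R"
  shows "(\<Sum>\<sigma>\<in>Pset c. \<Sum>\<psi>\<in>R. card {j\<in>{0..<c}. cmp V \<sigma> (shf V c j \<psi>) \<in> F})
       = c * (\<Sum>\<sigma>\<in>Pset c. card {\<psi>\<in>R. cmp V \<sigma> \<psi> \<in> F})"
proof -
  let ?I = "\<lambda>\<sigma> \<psi>. (if cmp V \<sigma> \<psi> \<in> F then 1 else 0::nat)"
  have "(\<Sum>\<sigma>\<in>Pset c. \<Sum>\<psi>\<in>R. card {j\<in>{0..<c}. cmp V \<sigma> (shf V c j \<psi>) \<in> F})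
     = (\<Sum>\<sigma>\<in>Pset c. \<Sum>\<psi>\<in>R. \<Sum>j\<in>{0..<c}. ?I \<sigma> (shf V c j \<psi>))"
    by (intro sum.cong refl card_filter_sum) simp
  also have "\<dots> = (\<Sum>\<sigma>\<in>Pset c. \<Sum>j\<in>{0..<c}. \<Sum>\<psi>\<in>R. ?I \<sigma> (shf V c j \<psi>))"
    by (rule sum.cong[OF refl], rule sum.swap)
  also have "\<dots> = (\<Sum>j\<in>{0..<c}. \<Sum>\<sigma>\<in>Pset c. \<Sum>\<psi>\<in>R. ?I \<sigma> (shf V c j \<psi>))"
    by (rule sum.swap)
  also have "\<dots> = (\<Sum>j\<in>{0..<c}. \<Sum>\<sigma>\<in>Pset c. \<Sum>\<psi>\<in>R. ?I \<sigma> \<psi>)"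
  proof (rule sum.cong[OF refl])
    fix j assume j: "j \<in> {0..<c}"
    have "(\<Sum>\<sigma>\<in>Pset c. \<Sum>\<psi>\<in>R. ?I \<sigma> (shf V c j \<psi>))
        = (\<Sum>\<sigma>\<in>Pset c. \<Sum>\<psi>\<in>R. ?I (restrict (\<sigma> \<circ> (\<lambda>x. (x+j) mod c)) {0..<c}) \<psi>)"
      using R by (intro sum.cong refl) (auto simp: cmp_shift subset_iff)
    also have "\<dots> = (\<Sum>\<sigma>\<in>Pset c. \<Sum>\<psi>\<in>R. ?I \<sigma> \<psi>)"
      using shift_reindex[of j c] j
      by (intro sum.reindex_bij_betw[where g = "\<lambda>\<sigma>. \<Sum>\<psi>\<in>R. ?I \<sigma> \<psi>"]) auto
    finally show "(\<Sum>\<sigma>\<in>Pset c. \<Sum>\<psi>\<in>R. ?I \<sigma> (shf V c j \<psi>)) = (\<Sum>\<sigma>\<in>Pset c. \<Sum>\<psi>\<in>R. ?I \<sigma> \<psi>)" .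
  qed
  also have "\<dots> = c * (\<Sum>\<sigma>\<in>Pset c. \<Sum>\<psi>\<in>R. ?I \<sigma> \<psi>)" by simp
  also have "\<dots> = c * (\<Sum>\<sigma>\<in>Pset c. card {\<psi>\<in>R. cmp V \<sigma> \<psi> \<in> F})"
    using fR by (simp add: card_filter_sum)
  finally show ?thesis .
qed


lemma card_cmp:
  assumes \<sigma>: "\<sigma> \<in> Pset c" and F: "F \<subseteq> V \<rightarrow>\<^sub>E {1..c}" and kc: "k \<le> c"
  shows "card {\<psi>\<in>Rset V c k. cmp V \<sigma> \<psi> \<in> F} = card {\<phi>\<in>F. \<phi> ` V = \<sigma> ` {0..<k}}"
proof (rule bij_betw_same_card[of "cmp V \<sigma>"])
  have injs: "inj_on \<sigma> {0..<c}" and ims: "\<sigma> ` {0..<c} = {1..c}"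
    using \<sigma> by (auto simp: Pset_def bij_betw_def)
  show "bij_betw (cmp V \<sigma>) {\<psi>\<in>Rset V c k. cmp V \<sigma> \<psi> \<in> F} {\<phi>\<in>F. \<phi> ` V = \<sigma> ` {0..<k}}"
    unfolding bij_betw_def
  proof
    show "inj_on (cmp V \<sigma>) {\<psi>\<in>Rset V c k. cmp V \<sigma> \<psi> \<in> F}"
    proof (rule inj_onI)
      fix \<psi>1 \<psi>2 assume p1: "\<psi>1 \<in> {\<psi>\<in>Rset V c k. cmp V \<sigma> \<psi> \<in> F}"
        and p2: "\<psi>2 \<in> {\<psi>\<in>Rset V c k. cmp V \<sigma> \<psi> \<in> F}" and eq: "cmp V \<sigma> \<psi>1 = cmp V \<sigma> \<psi>2"
      show "\<psi>1 = \<psi>2"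
      proof (rule extensionalityI[of _ V])
        show "\<psi>1 \<in> extensional V" "\<psi>2 \<in> extensional V" using p1 p2 by (auto simp: Rset_def PiE_def)
      next
        fix v assume v: "v \<in> V"
        have "\<sigma> (\<psi>1 v) = \<sigma> (\<psi>2 v)" using eq v unfolding cmp_def by (metis restrict_apply')
        moreover have "\<psi>1 v \<in> {0..<c}" "\<psi>2 v \<in> {0..<c}" using p1 p2 v by (auto simp: Rset_def)
        ultimately show "\<psi>1 v = \<psi>2 v" using injs by (auto dest: inj_onD)
      qed
    qed
  next
    show "cmp V \<sigma> ` {\<psi>\<in>Rset V c k. cmp V \<sigma> \<psi> \<in> F} = {\<phi>\<in>F. \<phi> ` V = \<sigma> ` {0..<k}}"
    proof (intro equalityI subsetI)
      fix \<phi> assume "\<phi> \<in> cmp V \<sigma> ` {\<psi>\<in>Rset V c k. cmp V \<sigma> \<psi> \<in> F}"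
      then obtain \<psi> where p: "\<psi> \<in> Rset V c k" "cmp V \<sigma> \<psi> \<in> F" "\<phi> = cmp V \<sigma> \<psi>" by blast
      have "\<phi> ` V = \<sigma> ` (\<psi> ` V)" unfolding p(3) cmp_def by auto
      then show "\<phi> \<in> {\<phi>\<in>F. \<phi> ` V = \<sigma> ` {0..<k}}" using p by (auto simp: Rset_def)
    next
      fix \<phi> assume \<phi>: "\<phi> \<in> {\<phi>\<in>F. \<phi> ` V = \<sigma> ` {0..<k}}"
      define \<psi> where "\<psi> = (\<lambda>v\<in>V. the_inv_into {0..<c} \<sigma> (\<phi> v))"
      have sub: "{0..<k} \<subseteq> {0..<c}" using kc by auto
      have inv: "\<psi> v \<in> {0..<k} \<and> \<sigma> (\<psi> v) = \<phi> v" if v: "v \<in> V" for v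
      proof -
        have "\<phi> v \<in> \<sigma> ` {0..<k}" using \<phi> v by auto
        then obtain x where x: "x \<in> {0..<k}" "\<phi> v = \<sigma> x" by blast
        then show ?thesis using v sub injs unfolding \<psi>_def by (auto simp: the_inv_into_f_f)
      qed
      have pv: "\<psi> ` V = {0..<k}"
      proof (intro equalityI subsetI)
        fix x assume "x \<in> \<psi> ` V" then show "x \<in> {0..<k}" using inv by auto
      next
        fix x assume x: "x \<in> {0..<k}"
        then have "\<sigma> x \<in> \<phi> ` V" using \<phi> by auto
        then obtain v where v: "v \<in> V" "\<sigma> x = \<phi> v" by auto
        then have "\<sigma> (\<psi> v) = \<sigma> x" "\<psi> v \<in> {0..<k}" using inv by auto
        then have "\<psi> v = x" using injs sub x by (auto dest: inj_onD)
        then show "x \<in> \<psi> ` V" using v by auto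
      qed
      have "\<psi> \<in> V \<rightarrow>\<^sub>E {0..<c}" unfolding PiE_iff
      proof
        show "\<forall>v\<in>V. \<psi> v \<in> {0..<c}"
        proof
          fix v assume "v \<in> V"
          then have "\<psi> v \<in> {0..<k}" using inv by blast
          then show "\<psi> v \<in> {0..<c}" using sub by blast
        qed
        show "\<psi> \<in> extensional V" unfolding \<psi>_def by simp
      qed
      then have R: "\<psi> \<in> Rset V c k" using pv by (simp add: Rset_def)
      have "cmp V \<sigma> \<psi> = \<phi>"
      proof (rule extensionalityI[of _ V])
        show "cmp V \<sigma> \<psi> \<in> extensional V" by (simp add: cmp_def)
        show "\<phi> \<in> extensional V" using \<phi> F by (auto simp: PiE_def)
        fix v assume "v \<in> V" then show "cmp V \<sigma> \<psi> v = \<phi> v" using inv by (simp add: cmp_def)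
      qed
      then show "\<phi> \<in> cmp V \<sigma> ` {\<psi>\<in>Rset V c k. cmp V \<sigma> \<psi> \<in> F}" using R \<phi> by force
    qed
  qed
qed

lemma sum_card_swap:
  assumes "finite A" "finite B"
  shows "(\<Sum>a\<in>A. card {b\<in>B. Q a b}) = (\<Sum>b\<in>B. card {a\<in>A. Q a b})"
  using assms by (simp add: card_filter_sum sum.swap[of _ A B])

definition Dn :: "nat \<Rightarrow> nat \<Rightarrow> nat set \<Rightarrow> nat" where
  "Dn c k A = card {\<sigma>\<in>Pset c. \<sigma> ` {0..<k} = A}"

lemma perm_exists:
  fixes A B :: "nat set" and c :: nat
  assumes A: "A \<subseteq> {1..c}" and B: "B \<subseteq> {1..c}" and AB: "card A = card B"
  shows "\<exists>\<pi>. bij_betw \<pi> {1..c} {1..c} \<and> \<pi> ` A = B"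
proof -
  have fA1: "finite A" using finite_subset[OF A] by simp
  have fA2: "finite B" using finite_subset[OF B] by simp
  note fA = fA1 fA2
  obtain f where f: "bij_betw f A B" using finite_same_card_bij[OF fA AB] by blast
  have "card ({1..c} - A) = card ({1..c} - B)" using A B AB fA by (simp add: card_Diff_subset)
  then obtain g where g: "bij_betw g ({1..c} - A) ({1..c} - B)"
    using finite_same_card_bij[of "{1..c} - A" "{1..c} - B"] by auto
  define \<pi> where "\<pi> x = (if x \<in> A then f x else g x)" for x
  have "bij_betw \<pi> A B" using f unfolding \<pi>_def by (rule bij_betw_cong[THEN iffD1, rotated]) auto
  moreover have "bij_betw \<pi> ({1..c} - A) ({1..c} - B)"
    using g unfolding \<pi>_def by (rule bij_betw_cong[THEN iffD1, rotated]) auto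
  ultimately have "bij_betw \<pi> (A \<union> ({1..c} - A)) (B \<union> ({1..c} - B))"
    by (rule bij_betw_combine) auto
  moreover have "A \<union> ({1..c} - A) = {1..c}" "B \<union> ({1..c} - B) = {1..c}" using A B by auto
  moreover have "\<pi> ` A = B" using \<open>bij_betw \<pi> A B\<close> by (simp add: bij_betw_def)
  ultimately show ?thesis by auto
qed

lemma Dn_le:
  assumes A: "A \<subseteq> {1..c}" and B: "B \<subseteq> {1..c}" and AB: "card A = card B" and kc: "k \<le> c"
  shows "Dn c k A \<le> Dn c k B"
proof -
  obtain \<pi> where \<pi>: "bij_betw \<pi> {1..c} {1..c}" "\<pi> ` A = B" using perm_exists[OF A B AB] by blast
  let ?h = "\<lambda>\<sigma>. restrict (\<pi> \<circ> \<sigma>) {0..<c}"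
  have fin: "finite {\<sigma>\<in>Pset c. \<sigma> ` {0..<k} = B}" using finite_Pset by simp
  have inj: "inj_on ?h {\<sigma>\<in>Pset c. \<sigma> ` {0..<k} = A}"
  proof (rule inj_onI)
    fix \<sigma>1 \<sigma>2 assume s1: "\<sigma>1 \<in> {\<sigma>\<in>Pset c. \<sigma> ` {0..<k} = A}" and s2: "\<sigma>2 \<in> {\<sigma>\<in>Pset c. \<sigma> ` {0..<k} = A}"
      and eq: "?h \<sigma>1 = ?h \<sigma>2"
    show "\<sigma>1 = \<sigma>2"
    proof (rule extensionalityI[of _ "{0..<c}"])
      show "\<sigma>1 \<in> extensional {0..<c}" "\<sigma>2 \<in> extensional {0..<c}"
        using s1 s2 unfolding Pset_def by (auto simp: PiE_def)
    next
      fix x assume x: "x \<in> {0..<c}"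
      have "\<pi> (\<sigma>1 x) = \<pi> (\<sigma>2 x)" using eq x by (metis comp_apply restrict_apply')
      moreover have "\<sigma>1 x \<in> {1..c}" "\<sigma>2 x \<in> {1..c}" using s1 s2 x unfolding Pset_def by auto
      ultimately show "\<sigma>1 x = \<sigma>2 x" using \<pi>(1) unfolding bij_betw_def by (auto dest: inj_onD)
    qed
  qed
  have into: "?h ` {\<sigma>\<in>Pset c. \<sigma> ` {0..<k} = A} \<subseteq> {\<sigma>\<in>Pset c. \<sigma> ` {0..<k} = B}"
  proof
    fix \<tau> assume "\<tau> \<in> ?h ` {\<sigma>\<in>Pset c. \<sigma> ` {0..<k} = A}"
    then obtain \<sigma> where \<sigma>: "\<sigma> \<in> Pset c" "\<sigma> ` {0..<k} = A" "\<tau> = ?h \<sigma>" by blast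
    have "bij_betw (\<pi> \<circ> \<sigma>) {0..<c} {1..c}"
      using bij_betw_trans[OF _ \<pi>(1)] \<sigma>(1) unfolding Pset_def by auto
    then have b: "bij_betw \<tau> {0..<c} {1..c}" unfolding \<sigma>(3)
      by (rule bij_betw_cong[THEN iffD1, rotated]) auto
    moreover have "\<tau> \<in> {0..<c} \<rightarrow>\<^sub>E {1..c}"
      using b unfolding \<sigma>(3) bij_betw_def by auto
    moreover have "\<tau> ` {0..<k} = B" using kc \<sigma>(2) \<pi>(2) unfolding \<sigma>(3) by (auto simp: image_comp[symmetric])
    ultimately show "\<tau> \<in> {\<sigma>\<in>Pset c. \<sigma> ` {0..<k} = B}" unfolding Pset_def by simp
  qed
  show ?thesis unfolding Dn_def using card_inj_on_le[OF inj into fin] .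
qed

lemma Dn_eq:
  assumes A: "A \<subseteq> {1..c}" and cA: "card A = k" and kc: "k \<le> c"
  shows "Dn c k A = Dn c k {1..k}"
proof -
  have B: "{1..k} \<subseteq> {1..c}" and cB: "card {1..k} = k" using kc by auto
  show ?thesis using Dn_le[OF A B _ kc] Dn_le[OF B A _ kc] cA cB by simp
qed

lemma Dn_pos: assumes kc: "k \<le> c" shows "Dn c k {1..k} > 0"
proof -
  let ?s = "restrict Suc {0..<c}"
  have "bij_betw Suc {0..<c} {1..c}" unfolding bij_betw_def
    by (auto simp: image_Suc_atLeastLessThan atLeastLessThanSuc_atLeastAtMost)
  then have b: "bij_betw ?s {0..<c} {1..c}" by (rule bij_betw_cong[THEN iffD1, rotated]) auto
  have "?s \<in> Pset c" using b unfolding Pset_def bij_betw_def by auto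
  moreover have "?s ` {0..<k} = {1..k}" using kc
    by (auto simp: image_Suc_atLeastLessThan atLeastLessThanSuc_atLeastAtMost)
  ultimately have "?s \<in> {\<sigma>\<in>Pset c. \<sigma> ` {0..<k} = {1..k}}" by simp
  then have ne: "{\<sigma>\<in>Pset c. \<sigma> ` {0..<k} = {1..k}} \<noteq> {}" by blast
  have fin: "finite {\<sigma>\<in>Pset c. \<sigma> ` {0..<k} = {1..k}}" using finite_Pset by simp
  show ?thesis unfolding Dn_def using card_gt_0_iff ne fin by blast
qed

lemma Dn_zero:
  assumes cA: "card A \<noteq> k" and kc: "k \<le> c"
  shows "Dn c k A = 0"
proof -
  have e: "{\<sigma>\<in>Pset c. \<sigma> ` {0..<k} = A} = {}"
  proof (rule ccontr)
    assume "{\<sigma>\<in>Pset c. \<sigma> ` {0..<k} = A} \<noteq> {}"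
    then obtain \<sigma> where \<sigma>: "\<sigma> \<in> Pset c" "\<sigma> ` {0..<k} = A" by blast
    have "inj_on \<sigma> {0..<k}" using \<sigma>(1) kc unfolding Pset_def bij_betw_def
      by (auto intro: inj_on_subset)
    then have "card A = k" using \<sigma>(2) card_image by fastforce
    then show False using cA by simp
  qed
  show ?thesis unfolding Dn_def e by simp
qed

lemma count_formula:
  assumes F: "F \<subseteq> V \<rightarrow>\<^sub>E {1..c}" and fF: "finite F" and kc: "k \<le> c"
  shows "(\<Sum>\<sigma>\<in>Pset c. card {\<psi>\<in>Rset V c k. cmp V \<sigma> \<psi> \<in> F})
        = Dn c k {1..k} * card {\<phi>\<in>F. card (\<phi> ` V) = k}"
proof -
  have "(\<Sum>\<sigma>\<in>Pset c. card {\<psi>\<in>Rset V c k. cmp V \<sigma> \<psi> \<in> F})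
     = (\<Sum>\<sigma>\<in>Pset c. card {\<phi>\<in>F. \<phi> ` V = \<sigma> ` {0..<k}})"
    using card_cmp[OF _ F kc] by simp
  also have "\<dots> = (\<Sum>\<phi>\<in>F. card {\<sigma>\<in>Pset c. \<phi> ` V = \<sigma> ` {0..<k}})"
    by (rule sum_card_swap[OF finite_Pset fF])
  also have "\<dots> = (\<Sum>\<phi>\<in>F. if card (\<phi> ` V) = k then Dn c k {1..k} else 0)"
  proof (rule sum.cong[OF refl])
    fix \<phi> assume "\<phi> \<in> F"
    then have sub: "\<phi> ` V \<subseteq> {1..c}" using F by auto
    have "card {\<sigma>\<in>Pset c. \<phi> ` V = \<sigma> ` {0..<k}} = Dn c k (\<phi> ` V)" unfolding Dn_def by metis
    then show "card {\<sigma>\<in>Pset c. \<phi> ` V = \<sigma> ` {0..<k}} = (if card (\<phi> ` V) = k then Dn c k {1..k} else 0)"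
      using Dn_eq[OF sub _ kc] Dn_zero[OF _ kc] by auto
  qed
  also have "\<dots> = Dn c k {1..k} * card {\<phi>\<in>F. card (\<phi> ` V) = k}"
    using fF by (simp add: card_filter_sum sum_distrib_left if_distrib cong: if_cong)
  finally show ?thesis .
qed


lemma cmp_in:
  assumes "\<sigma> \<in> Pset c" "\<psi> \<in> Rset V c k"
  shows "cmp V \<sigma> \<psi> \<in> V \<rightarrow>\<^sub>E {1..c}"
  unfolding PiE_iff
proof
  show "\<forall>v\<in>V. cmp V \<sigma> \<psi> v \<in> {1..c}"
  proof
    fix v assume v: "v \<in> V"
    then have "\<psi> v \<in> {0..<c}" using assms(2) unfolding Rset_def by auto
    then have "\<sigma> (\<psi> v) \<in> {1..c}" using assms(1) unfolding Pset_def by auto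
    then show "cmp V \<sigma> \<psi> v \<in> {1..c}" using v unfolding cmp_def by simp
  qed
  show "cmp V \<sigma> \<psi> \<in> extensional V" unfolding cmp_def by simp
qed

lemma per_k:
  assumes F: "F \<subseteq> V \<rightarrow>\<^sub>E {1..c}" and fV: "finite V" and V: "V \<noteq> {}" and isF: "isect V F"
    and k1: "1 \<le> k" and kc: "2*k \<le> c"
  shows "c * card {\<phi>\<in>F. card (\<phi>`V) = k} \<le> k * card {\<phi>\<in>V \<rightarrow>\<^sub>E {1..c}. card (\<phi>`V) = k}"
proof -
  let ?M = "V \<rightarrow>\<^sub>E {1..c}"
  let ?P = "Pset c"
  let ?R = "Rset V c k"
  let ?D = "Dn c k {1..k}"
  have kc': "k \<le> c" using kc by simp
  have fM: "finite ?M" by (rule finite_PiE[OF fV]) auto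
  have fF: "finite F" using finite_subset[OF F fM] .
  have fR: "finite ?R" using finite_Rset[OF fV] .
  have Rsub: "?R \<subseteq> V \<rightarrow>\<^sub>E {0..<c}" by (auto simp: Rset_def)
  have "c * (?D * card {\<phi>\<in>F. card (\<phi>`V) = k}) = c * (\<Sum>\<sigma>\<in>?P. card {\<psi>\<in>?R. cmp V \<sigma> \<psi> \<in> F})"
    using count_formula[OF F fF kc'] by simp
  also have "\<dots> = (\<Sum>\<sigma>\<in>?P. \<Sum>\<psi>\<in>?R. card {j\<in>{0..<c}. cmp V \<sigma> (shf V c j \<psi>) \<in> F})"
    using sum_shift[OF Rsub fR] by simp
  also have "\<dots> \<le> (\<Sum>\<sigma>\<in>?P. \<Sum>\<psi>\<in>?R. k)"
  proof (intro sum_mono)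
    fix \<sigma> \<psi> assume "\<sigma> \<in> ?P" "\<psi> \<in> ?R"
    then show "card {j\<in>{0..<c}. cmp V \<sigma> (shf V c j \<psi>) \<in> F} \<le> k"
      using shift_bound[OF _ _ V k1 kc isF] by blast
  qed
  also have "\<dots> = k * (\<Sum>\<sigma>\<in>?P. card {\<psi>\<in>?R. cmp V \<sigma> \<psi> \<in> ?M})"
  proof -
    have "card {\<psi>\<in>?R. cmp V \<sigma> \<psi> \<in> ?M} = card ?R" if "\<sigma> \<in> ?P" for \<sigma>
    proof -
      have "{\<psi>\<in>?R. cmp V \<sigma> \<psi> \<in> ?M} = ?R" using cmp_in[OF that] by blast
      then show ?thesis by simp
    qed
    then show ?thesis by (simp add: sum_distrib_left)
  qed
  also have "\<dots> = k * (?D * card {\<phi>\<in>?M. card (\<phi>`V) = k})"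
    using count_formula[OF subset_refl fM kc'] by simp
  finally have "(c * card {\<phi>\<in>F. card (\<phi>`V) = k}) * ?D \<le> (k * card {\<phi>\<in>?M. card (\<phi>`V) = k}) * ?D"
    by (simp add: ac_simps)
  then show ?thesis using Dn_pos[OF kc'] by simp
qed

lemma card_split:
  assumes G: "G \<subseteq> V \<rightarrow>\<^sub>E {1..c}" and fG: "finite G" and fV: "finite V" and V: "V \<noteq> {}"
    and cV: "card V = n"
  shows "card G = (\<Sum>k\<in>{1..n}. card {\<phi>\<in>G. card (\<phi>`V) = k})"
proof -
  have "(\<Sum>k\<in>{1..n}. card {\<phi>\<in>G. card (\<phi>`V) = k})
      = (\<Sum>k\<in>{1..n}. \<Sum>\<phi>\<in>G. if card (\<phi>`V) = k then 1 else 0)"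
    by (intro sum.cong refl card_filter_sum fG)
  also have "\<dots> = (\<Sum>\<phi>\<in>G. \<Sum>k\<in>{1..n}. if card (\<phi>`V) = k then 1 else 0)"
    by (rule sum.swap)
  also have "\<dots> = (\<Sum>\<phi>\<in>G. 1)"
  proof (rule sum.cong[OF refl])
    fix \<phi> assume "\<phi> \<in> G"
    have "card (\<phi>`V) \<le> n" using card_image_le[OF fV] cV by metis
    moreover have "card (\<phi>`V) \<ge> 1" using V fV by (simp add: Suc_le_eq card_gt_0_iff)
    ultimately have "card (\<phi>`V) \<in> {1..n}" by simp
    then show "(\<Sum>k\<in>{1..n}. if card (\<phi>`V) = k then 1 else 0) = (1::nat)" by simp
  qed
  also have "\<dots> = card G" by simp
  finally show ?thesis by simp
qed

lemma main_count:
  assumes F: "F \<subseteq> V \<rightarrow>\<^sub>E {1..c}" and fV: "finite V" and cV: "card V = n" and n1: "1 \<le> n"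
    and cn: "2*n \<le> c" and isF: "isect V F"
  shows "card F \<le> n * c^(n-1)"
proof -
  let ?M = "V \<rightarrow>\<^sub>E {1..c}"
  have V: "V \<noteq> {}" using cV n1 by auto
  have fM: "finite ?M" by (rule finite_PiE[OF fV]) auto
  have fF: "finite F" using finite_subset[OF F fM] .
  have cM: "card ?M = c ^ n" using card_PiE[OF fV, of "\<lambda>_. {1..c}"] cV by simp
  have "c * card F = (\<Sum>k\<in>{1..n}. c * card {\<phi>\<in>F. card (\<phi>`V) = k})"
    using card_split[OF F fF fV V cV] by (simp add: sum_distrib_left)
  also have "\<dots> \<le> (\<Sum>k\<in>{1..n}. k * card {\<phi>\<in>?M. card (\<phi>`V) = k})"
  proof (rule sum_mono)
    fix k assume "k \<in> {1..n}"
    then have "1 \<le> k" "2*k \<le> c" using cn by auto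
    then show "c * card {\<phi>\<in>F. card (\<phi>`V) = k} \<le> k * card {\<phi>\<in>?M. card (\<phi>`V) = k}"
      using per_k[OF F fV V isF] by blast
  qed
  also have "\<dots> \<le> (\<Sum>k\<in>{1..n}. n * card {\<phi>\<in>?M. card (\<phi>`V) = k})"
    by (rule sum_mono) simp
  also have "\<dots> = n * card ?M"
    using card_split[OF subset_refl fM fV V cV] by (simp add: sum_distrib_left)
  also have "\<dots> = c * (n * c^(n-1))" using cM n1
    by (metis (no_types, lifting) Suc_diff_le diff_Suc_1 mult.left_commute power_Suc)
  finally have "c * card F \<le> c * (n * c^(n-1))" .
  moreover have "c > 0" using cn n1 by simp
  ultimately show ?thesis by simp
qed

theorem lemma4:
  fixes V :: "'a set" and E :: "'a \<Rightarrow> 'a \<Rightarrow> bool" and n c :: nat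
  assumes "graph_on V E" and "card V = n" and "n \<ge> 1" and "c \<ge> 2 * n"
  shows "exp_alpha V E c \<le> n * c ^ (n - 1)"
proof -
  have fV: "finite V" using assms(1) unfolding graph_on_def by simp
  have fM: "finite (exp_verts V c)" unfolding exp_verts_def by (rule finite_PiE[OF fV]) auto
  have fin: "finite (card ` {S. exp_indep V E c S})"
  proof -
    have "{S. exp_indep V E c S} \<subseteq> Pow (exp_verts V c)" unfolding exp_indep_def by auto
    then show ?thesis using fM by (meson finite_Pow_iff finite_imageI finite_subset)
  qed
  have ne: "card ` {S. exp_indep V E c S} \<noteq> {}"
  proof -
    have "exp_indep V E c {}" unfolding exp_indep_def by simp
    then show ?thesis by blast
  qed
  have bnd: "a \<le> n * c ^ (n - 1)" if aA: "a \<in> card ` {S. exp_indep V E c S}" for a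
  proof -
    obtain S where S: "exp_indep V E c S" "a = card S" using aA by blast
    have sub: "S \<subseteq> V \<rightarrow>\<^sub>E {1..c}" using S(1) unfolding exp_indep_def exp_verts_def by simp
    have "isect V S" unfolding isect_def
    proof (intro ballI impI)
      fix \<phi>1 \<phi>2 assume p: "\<phi>1 \<in> S" "\<phi>2 \<in> S" "\<phi>1 \<noteq> \<phi>2"
      then have "\<not> co_proper V E \<phi>1 \<phi>2" using S(1) unfolding exp_indep_def by blast
      then obtain u v where "u \<in> V" "v \<in> V" "\<phi>1 u = \<phi>2 v" unfolding co_proper_def by blast
      then show "\<phi>1 ` V \<inter> \<phi>2 ` V \<noteq> {}" by blast
    qed
    then show ?thesis using main_count[OF sub fV assms(2) assms(3) assms(4)] S(2) by simp
  qed
  show ?thesis unfolding exp_alpha_def using fin ne bnd by (simp add: Max.boundedI)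
qed

end
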